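(* Let $f\in\mathcal{C}$ and let $f^\ast(t):=t f(1/t)$ for $t>0$, extended by $f^\ast(0):=\lim_{t\downarrow0}f^\ast(t)\in(-\infty,\infty]$. Then for all probability measures $P,Q$ on a common measurable space and all $\gamma\in[1,\infty)$, $$D_f(P\|Q)\ \ge\ f^\ast\!\Bigl(1+\tfrac1\gamma E_\gamma(P\|Q)\Bigr) + f^\ast\!\Bigl(\tfrac1\gamma\bigl(1-E_\gamma(P\|Q)\bigr)\Bigr) - f^\ast\!\Bigl(\tfrac1\gamma\Bigr).$$
   Context: $\mathcal{C}$ is the set of convex $f\colon(0,\infty)\to\mathbb{R}$ with $f(1)=0$. For densities $p,q$ of $P,Q$ w.r.t. a dominating measure $\mu$, $D_f(P\|Q):=\int qf(p/q)\,\mathrm{d}\mu$ with conventions $f(0):=\lim_{t\downarrow0}f(t)$, $0f(0/0)=0$, $0f(a/0)=a\lim_{u\to\infty}f(u)/u$ for $a>0$. For $\gamma\ge1$, $E_\gamma(P\|Q):=\sup_U(P(U)-\gamma Q(U))=\int(p-\gamma q)^+\,\mathrm{d}\mu$. *)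

theory Defs
  imports "HOL-Probability.Probability"
begin

definition f_zero :: "(real \<Rightarrow> real) \<Rightarrow> ereal" where
  "f_zero f = Lim (at_right 0) (\<lambda>t. ereal (f t))"

definition f_slope_inf :: "(real \<Rightarrow> real) \<Rightarrow> ereal" where
  "f_slope_inf f = Lim at_top (\<lambda>u. ereal (f u / u))"

definition fdiv_integrand :: "(real \<Rightarrow> real) \<Rightarrow> real \<Rightarrow> real \<Rightarrow> ereal" where
  "fdiv_integrand f a b =
     (if b > 0 then (if a > 0 then ereal (b * f (a / b)) else ereal b * f_zero f)
      else if a > 0 then ereal a * f_slope_inf f else 0)"

definition f_divergence ::
  "(real \<Rightarrow> real) \<Rightarrow> 'a measure \<Rightarrow> ('a \<Rightarrow> real) \<Rightarrow> ('a \<Rightarrow> real) \<Rightarrow> ereal" where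
  "f_divergence f \<mu> p q =
     enn2ereal (\<integral>\<^sup>+ x. e2ennreal (fdiv_integrand f (p x) (q x)) \<partial>\<mu>)
     - enn2ereal (\<integral>\<^sup>+ x. e2ennreal (- fdiv_integrand f (p x) (q x)) \<partial>\<mu>)"

definition E_gamma :: "real \<Rightarrow> 'a measure \<Rightarrow> 'a measure \<Rightarrow> real" where
  "E_gamma \<gamma> P Q = (SUP U \<in> sets P. measure P U - \<gamma> * measure Q U)"

definition f_star :: "(real \<Rightarrow> real) \<Rightarrow> real \<Rightarrow> ereal" where
  "f_star f t = (if t > 0 then ereal (t * f (1 / t))
                 else Lim (at_right 0) (\<lambda>s. ereal (s * f (1 / s))))"

end

theory Submission
  imports Defs
begin


lemma slope_mono:
  fixes f :: "real \<Rightarrow> real"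
  assumes cvx: "convex_on {0<..} f" and "0 < a" "a < b" "b < d"
  shows "(f b - f a) / (b - a) \<le> (f d - f b) / (d - b)"
proof -
  have "(f a - f b) / (a - b) \<le> (f a - f d) / (a - d)"
       "(f a - f d) / (a - d) \<le> (f b - f d) / (b - d)"
    using convex_on_slope_le[OF cvx, of a d b] assms by auto
  moreover have "(f a - f b) / (a - b) = (f b - f a) / (b - a)"
    "(f b - f d) / (b - d) = (f d - f b) / (d - b)"
    by (simp_all add: divide_simps) (simp_all add: algebra_simps)
  ultimately show ?thesis by linarith
qed

lemma subgrad:
  fixes f :: "real \<Rightarrow> real"
  assumes cvx: "convex_on {0<..} f" and u0: "u0 > 0"
  shows "\<exists>g. (\<forall>u>0. f u0 + g * (u - u0) \<le> f u) \<and>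
             (\<forall>v. 0 < v \<and> v < u0 \<longrightarrow> (f u0 - f v) / (u0 - v) \<le> g)"
proof -
  define S where "S = (\<lambda>v. (f u0 - f v) / (u0 - v)) ` {0<..<u0}"
  have ne: "S \<noteq> {}" using u0 unfolding S_def by auto
  have ub: "s \<le> (f w - f u0) / (w - u0)" if "s \<in> S" "w > u0" for s w
    using that slope_mono[OF cvx, of _ u0 w] unfolding S_def by auto
  have bdd: "bdd_above S" using ub[of _ "u0+1"] by (auto simp: bdd_above_def)
  define g where "g = Sup S"
  have up: "(f u0 - f v) / (u0 - v) \<le> g" if "0 < v" "v < u0" for v
    unfolding g_def by (rule cSup_upper[OF _ bdd]) (use that in \<open>auto simp: S_def\<close>)
  have "f u0 + g * (u - u0) \<le> f u" if "u > 0" for u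
  proof (cases u u0 rule: linorder_cases)
    case less
    then have "(f u0 - f u) / (u0 - u) \<le> g" using up that by auto
    with less show ?thesis by (simp add: divide_simps algebra_simps)
  next
    case equal then show ?thesis by simp
  next
    case greater
    have "g \<le> (f u - f u0) / (u - u0)"
      unfolding g_def by (rule cSup_least[OF ne]) (use ub greater in auto)
    with greater show ?thesis by (simp add: divide_simps algebra_simps)
  qed
  then show ?thesis using up by blast
qed



lemma lim_top:
  fixes f :: "real \<Rightarrow> real"
  assumes cvx: "convex_on {0<..} f" and f1: "f 1 = 0"
  defines "L \<equiv> (SUP u\<in>{1<..}. ereal (f u / (u - 1)))"
  shows "((\<lambda>u. ereal (f u / (u - 1))) \<longlongrightarrow> L) at_top"
    and "((\<lambda>u. ereal (f u / u)) \<longlongrightarrow> L) at_top"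
proof -
  have mono: "f u / (u - 1) \<le> f w / (w - 1)" if "1 < u" "u < w" for u w
  proof -
    have "(f 1 - f u) / (1 - u) \<le> (f 1 - f w) / (1 - w)"
      using convex_on_slope_le(1)[OF cvx, of 1 w u] that by auto
    moreover have "(f 1 - f u) / (1 - u) = f u / (u - 1)" "(f 1 - f w) / (1 - w) = f w / (w - 1)"
      using f1 that by (simp_all add: divide_simps) (simp_all add: algebra_simps)
    ultimately show ?thesis by simp
  qed
  show 1: "((\<lambda>u. ereal (f u / (u - 1))) \<longlongrightarrow> L) at_top"
  proof (rule increasing_tendsto)
    show "\<forall>\<^sub>F n in at_top. ereal (f n / (n - 1)) \<le> L"
      unfolding L_def using eventually_gt_at_top[of 1]
      by eventually_elim (auto intro: SUP_upper)
  next
    fix x assume "x < L"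
    then obtain u where u: "u > 1" "x < ereal (f u / (u - 1))"
      unfolding L_def less_SUP_iff by auto
    show "\<forall>\<^sub>F n in at_top. x < ereal (f n / (n - 1))"
      using eventually_gt_at_top[of u]
    proof eventually_elim
      case (elim n)
      then have "f u / (u - 1) \<le> f n / (n - 1)" using mono u by auto
      then show ?case using u(2) by (meson ereal_less_eq(3) order_less_le_trans)
    qed
  qed
  have 2: "((\<lambda>u. ereal ((u - 1) / u)) \<longlongrightarrow> 1) at_top"
  proof -
    have "((\<lambda>u::real. 1 - inverse u) \<longlongrightarrow> 1 - 0) at_top"
      by (rule tendsto_diff[OF tendsto_const tendsto_inverse_0_at_top[OF filterlim_ident]])
    moreover have "\<forall>\<^sub>F u in at_top. 1 - inverse u = (u - 1) / (u::real)"
      using eventually_gt_at_top[of 0] by eventually_elim (simp add: divide_simps)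
    ultimately have "((\<lambda>u::real. (u - 1) / u) \<longlongrightarrow> 1 - 0) at_top"
      by (rule Lim_transform_eventually)
    then show ?thesis by (simp add: one_ereal_def)
  qed
  have "((\<lambda>u. ereal (f u / (u - 1)) * ereal ((u - 1) / u)) \<longlongrightarrow> L * 1) at_top"
    by (rule tendsto_mult_ereal[OF 1 2]) auto
  moreover have "\<forall>\<^sub>F u in at_top. ereal (f u / (u - 1)) * ereal ((u - 1) / u) = ereal (f u / u)"
    using eventually_gt_at_top[of 1] by eventually_elim (simp add: divide_simps)
  ultimately show "((\<lambda>u. ereal (f u / u)) \<longlongrightarrow> L) at_top"
    using Lim_transform_eventually by fastforce
qed

lemma lim_zero:
  fixes f :: "real \<Rightarrow> real"
  assumes cvx: "convex_on {0<..} f" and f1: "f 1 = 0"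
  shows "\<exists>L. ((\<lambda>t. ereal (f t)) \<longlongrightarrow> L) (at_right 0)"
proof -
  define L where "L = (SUP t\<in>{0<..<1}. ereal (f t / (1 - t)))"
  have mono: "f t / (1 - t) \<le> f s / (1 - s)" if "0 < s" "s < t" "t < 1" for s t
  proof -
    have "(f s - f 1) / (s - 1) \<le> (f t - f 1) / (t - 1)"
      using convex_on_slope_le(2)[OF cvx, of s 1 t] that by auto
    moreover have "(f s - f 1) / (s - 1) = - (f s / (1 - s))" "(f t - f 1) / (t - 1) = - (f t / (1 - t))"
      using f1 that by (simp_all add: divide_simps) (simp_all add: algebra_simps)
    ultimately show ?thesis by simp
  qed
  have 1: "((\<lambda>t. ereal (f t / (1 - t))) \<longlongrightarrow> L) (at_right 0)"
  proof (rule increasing_tendsto)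
    show "\<forall>\<^sub>F n in at_right 0. ereal (f n / (1 - n)) \<le> L"
      unfolding L_def eventually_at_right_field
      by (rule exI[of _ 1]) (auto intro: SUP_upper)
  next
    fix x assume "x < L"
    then obtain u where u: "0 < u" "u < 1" "x < ereal (f u / (1 - u))"
      unfolding L_def less_SUP_iff by auto
    show "\<forall>\<^sub>F n in at_right 0. x < ereal (f n / (1 - n))"
      unfolding eventually_at_right_field
    proof (rule exI[of _ u], safe)
      show "0 < u" by fact
      fix n :: real assume "0 < n" "n < u"
      then have "f u / (1 - u) \<le> f n / (1 - n)" using mono u by auto
      then show "x < ereal (f n / (1 - n))" using u(3) by (meson ereal_less_eq(3) order_less_le_trans)
    qed
  qed
  have 2: "((\<lambda>t. ereal (1 - t)) \<longlongrightarrow> 1) (at_right 0)"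
  proof -
    have "((\<lambda>t. 1 - t) \<longlongrightarrow> (1::real) - 0) (at_right 0)"
      by (intro tendsto_intros)
    then show ?thesis by (simp add: one_ereal_def)
  qed
  have "((\<lambda>t. ereal (f t / (1 - t)) * ereal (1 - t)) \<longlongrightarrow> L * 1) (at_right 0)"
    by (rule tendsto_mult_ereal[OF 1 2]) auto
  moreover have "\<forall>\<^sub>F t in at_right 0. ereal (f t / (1 - t)) * ereal (1 - t) = ereal (f t)"
    unfolding eventually_at_right_field by (rule exI[of _ 1]) auto
  ultimately have "((\<lambda>t. ereal (f t)) \<longlongrightarrow> L * 1) (at_right 0)"
    by (rule Lim_transform_eventually)
  then show ?thesis by blast
qed



lemma pw:
  fixes f :: "real \<Rightarrow> real"
  assumes t1: "\<forall>u>0. A1 * u + B1 \<le> f u" and t2: "\<forall>u>0. A2 * u + B2 \<le> f u"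
    and g: "\<gamma> > 0" and fz: "ereal B2 \<le> f_zero f" and fs: "ereal A1 \<le> f_slope_inf f"
    and p: "p \<ge> 0" and q: "q \<ge> 0"
  shows "ereal (p * (A1 + A2 - f \<gamma> / \<gamma>) + B1 * (p / \<gamma> - max 0 (p - \<gamma> * q) / \<gamma>)
                + B2 * (q + max 0 (p - \<gamma> * q) / \<gamma>)) \<le> fdiv_integrand f p q"
proof -
  have c1: "A1 + B1 / \<gamma> \<le> f \<gamma> / \<gamma>" and c2: "A2 + B2 / \<gamma> \<le> f \<gamma> / \<gamma>"
  proof -
    have "A1 * \<gamma> + B1 \<le> f \<gamma>" "A2 * \<gamma> + B2 \<le> f \<gamma>" using t1 t2 g by auto
    then have "(A1 * \<gamma> + B1) / \<gamma> \<le> f \<gamma> / \<gamma>" "(A2 * \<gamma> + B2) / \<gamma> \<le> f \<gamma> / \<gamma>"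
      using g by (simp_all add: divide_right_mono)
    moreover have "(A1 * \<gamma> + B1) / \<gamma> = A1 + B1 / \<gamma>" "(A2 * \<gamma> + B2) / \<gamma> = A2 + B2 / \<gamma>"
      using g by (simp_all add: add_divide_distrib)
    ultimately show "A1 + B1 / \<gamma> \<le> f \<gamma> / \<gamma>" "A2 + B2 / \<gamma> \<le> f \<gamma> / \<gamma>" by simp_all
  qed
  show ?thesis
  proof (cases "q > 0")
    case qpos: True
    show ?thesis
    proof (cases "p > 0")
      case ppos: True
      have "A1 * (p/q) + B1 \<le> f (p/q)" "A2 * (p/q) + B2 \<le> f (p/q)" using t1 t2 ppos qpos divide_pos_pos by blast+
      then have h1: "A1 * p + B1 * q \<le> q * f (p/q)" and h2: "A2 * p + B2 * q \<le> q * f (p/q)"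
        using qpos by (simp_all add: field_simps)
      have "p * (A1 + A2 - f \<gamma> / \<gamma>) + B1 * (p / \<gamma> - max 0 (p - \<gamma> * q) / \<gamma>)
                + B2 * (q + max 0 (p - \<gamma> * q) / \<gamma>) \<le> q * f (p/q)"
      proof (cases "p \<le> \<gamma> * q")
        case True
        then have "max 0 (p - \<gamma> * q) = 0" by simp
        moreover have "p * (A1 + B1 / \<gamma>) \<le> p * (f \<gamma> / \<gamma>)" by (rule mult_left_mono[OF c1]) (use ppos in simp)
        ultimately show ?thesis using h2 by (simp add: algebra_simps)
      next
        case False
        then have "max 0 (p - \<gamma> * q) = p - \<gamma> * q" by simp
        moreover have "p * (A2 + B2 / \<gamma>) \<le> p * (f \<gamma> / \<gamma>)" by (rule mult_left_mono[OF c2]) (use ppos in simp)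
        ultimately show ?thesis using h1 g by (simp add: algebra_simps diff_divide_distrib)
      qed
      then show ?thesis using ppos qpos by (simp add: fdiv_integrand_def)
    next
      case False
      then have p0: "p = 0" using p by simp
      have "ereal q * ereal B2 \<le> ereal q * f_zero f"
        using fz qpos by (intro ereal_mult_left_mono) auto
      then show ?thesis using p0 qpos g by (simp add: fdiv_integrand_def mult.commute)
    qed
  next
    case False
    then have q0: "q = 0" using q by simp
    show ?thesis
    proof (cases "p > 0")
      case ppos: True
      have "p * (A2 + B2 / \<gamma>) \<le> p * (f \<gamma> / \<gamma>)" by (rule mult_left_mono[OF c2]) (use ppos in simp)
      then have "p * (A1 + A2 - f \<gamma> / \<gamma>) + B1 * (p / \<gamma> - max 0 (p - \<gamma> * q) / \<gamma>)
                + B2 * (q + max 0 (p - \<gamma> * q) / \<gamma>) \<le> p * A1"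
        using q0 ppos g by (simp add: algebra_simps)
      moreover have "ereal p * ereal A1 \<le> ereal p * f_slope_inf f"
        using fs ppos by (intro ereal_mult_left_mono) auto
      ultimately show ?thesis using ppos q0
        by (simp add: fdiv_integrand_def) (metis ereal_less_eq(3) order_trans times_ereal.simps(1))
    next
      case False
      then have "p = 0" using p by simp
      then show ?thesis using q0 by (simp add: fdiv_integrand_def)
    qed
  qed
qed

lemma div_ge:
  fixes g :: "'a \<Rightarrow> real" and h :: "'a \<Rightarrow> ereal"
  assumes "integrable M g" and le: "\<forall>x\<in>space M. ereal (g x) \<le> h x"
  shows "ereal (integral\<^sup>L M g) \<le>
     enn2ereal (\<integral>\<^sup>+ x. e2ennreal (h x) \<partial>M) - enn2ereal (\<integral>\<^sup>+ x. e2ennreal (- h x) \<partial>M)"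
proof -
  obtain r s where rs: "0 \<le> r" "0 \<le> s" "(\<integral>\<^sup>+x. ennreal (g x)\<partial>M) = ennreal r"
    "(\<integral>\<^sup>+x. ennreal (- g x)\<partial>M) = ennreal s" "integral\<^sup>L M g = r - s"
    using integrableE[OF assms(1)] by metis
  have "(\<integral>\<^sup>+x. ennreal (g x)\<partial>M) \<le> (\<integral>\<^sup>+ x. e2ennreal (h x) \<partial>M)"
    using le by (intro nn_integral_mono) (metis e2ennreal_ereal e2ennreal_mono)
  then have a: "ereal r \<le> enn2ereal (\<integral>\<^sup>+ x. e2ennreal (h x) \<partial>M)"
    using rs by (metis enn2ereal_ennreal less_eq_ennreal.rep_eq)
  have "(\<integral>\<^sup>+ x. e2ennreal (- h x) \<partial>M) \<le> (\<integral>\<^sup>+x. ennreal (- g x)\<partial>M)"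
    using le by (intro nn_integral_mono) (metis e2ennreal_ereal e2ennreal_mono ereal_minus_le_minus uminus_ereal.simps(1))
  then have b: "enn2ereal (\<integral>\<^sup>+ x. e2ennreal (- h x) \<partial>M) \<le> ereal s"
    using rs by (metis enn2ereal_ennreal less_eq_ennreal.rep_eq)
  have "ereal (r - s) = ereal r - ereal s" by simp
  also have "\<dots> \<le> enn2ereal (\<integral>\<^sup>+ x. e2ennreal (h x) \<partial>M) - enn2ereal (\<integral>\<^sup>+ x. e2ennreal (- h x) \<partial>M)"
    by (rule ereal_minus_mono[OF a b])
  finally show ?thesis using rs by simp
qed



lemma lims:
  fixes f :: "real \<Rightarrow> real"
  assumes cvx: "convex_on {0<..} f" and f1: "f 1 = 0" and t: "\<forall>u>0. A * u + B \<le> f u"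
  shows "ereal B \<le> f_zero f" "ereal A \<le> f_slope_inf f"
proof -
  obtain L0 where L0: "((\<lambda>t. ereal (f t)) \<longlongrightarrow> L0) (at_right 0)"
    using lim_zero[OF cvx f1] by blast
  have "f_zero f = L0" unfolding f_zero_def
    by (rule tendsto_Lim[OF trivial_limit_at_right_real L0])
  moreover have "ereal (A * 0 + B) \<le> L0"
  proof (rule tendsto_le[OF trivial_limit_at_right_real L0])
    show "((\<lambda>t. ereal (A * t + B)) \<longlongrightarrow> ereal (A * 0 + B)) (at_right 0)"
      by (intro tendsto_ereal tendsto_intros)
    show "\<forall>\<^sub>F x in at_right 0. ereal (A * x + B) \<le> ereal (f x)"
      unfolding eventually_at_right_field using t by (intro exI[of _ 1]) auto
  qed
  ultimately show "ereal B \<le> f_zero f" by simp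
  define L where "L \<equiv> (SUP u\<in>{1<..}. ereal (f u / (u - 1)))"
  have L: "((\<lambda>u. ereal (f u / u)) \<longlongrightarrow> L) at_top" unfolding L_def by (rule lim_top(2)[OF cvx f1])
  have "f_slope_inf f = L" unfolding f_slope_inf_def
    by (rule tendsto_Lim[OF trivial_limit_at_top_linorder L])
  moreover have "ereal (A + B * 0) \<le> L"
  proof (rule tendsto_le[OF trivial_limit_at_top_linorder L])
    show "((\<lambda>u. ereal (A + B * inverse u)) \<longlongrightarrow> ereal (A + B * 0)) at_top"
      by (intro tendsto_ereal tendsto_add tendsto_mult tendsto_const tendsto_inverse_0_at_top filterlim_ident)
    show "\<forall>\<^sub>F x in at_top. ereal (A + B * inverse x) \<le> ereal (f x / x)"
      using eventually_gt_at_top[of 0]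
    proof eventually_elim
      case (elim x)
      then have "(A * x + B) / x \<le> f x / x" using t by (simp add: divide_right_mono)
      moreover have "A + B * inverse x = (A*x+B)/x"
        using elim by (simp add: add_divide_distrib inverse_eq_divide)
      ultimately show ?case by simp
    qed
  qed
  ultimately show "ereal A \<le> f_slope_inf f" by simp
qed

lemma fstar0:
  fixes f :: "real \<Rightarrow> real"
  assumes cvx: "convex_on {0<..} f" and f1: "f 1 = 0"
  shows "f_star f 0 = (SUP u\<in>{1<..}. ereal (f u / (u - 1)))"
proof -
  define L where "L \<equiv> (SUP u\<in>{1<..}. ereal (f u / (u - 1)))"
  have L: "((\<lambda>u. ereal (f u / u)) \<longlongrightarrow> L) at_top" unfolding L_def by (rule lim_top(2)[OF cvx f1])
  have "((\<lambda>s. ereal (f (inverse s) / inverse s)) \<longlongrightarrow> L) (at_right 0)"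
    using filterlim_compose[OF L filterlim_inverse_at_top_right] by simp
  moreover have "\<forall>\<^sub>F s in at_right 0. ereal (f (inverse s) / inverse s) = ereal (s * f (1 / s))"
    unfolding eventually_at_right_field by (intro exI[of _ 1]) (auto, metis divide_inverse inverse_eq_divide inverse_inverse_eq mult.commute)
  ultimately have "((\<lambda>s. ereal (s * f (1 / s))) \<longlongrightarrow> L) (at_right 0)"
    by (rule Lim_transform_eventually)
  then show ?thesis unfolding f_star_def L_def
    using tendsto_Lim[OF trivial_limit_at_right_real] by auto
qed

lemma dens:
  fixes p :: "'a \<Rightarrow> real"
  assumes P: "prob_space (density M p)" and pm[measurable]: "p \<in> borel_measurable M"
    and pn: "\<forall>x\<in>space M. p x \<ge> 0"
  shows "integrable M p" "integral\<^sup>L M p = 1"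
    "\<And>U. U \<in> sets M \<Longrightarrow> integrable M (\<lambda>x. p x * indicator U x)"
    "\<And>U. U \<in> sets M \<Longrightarrow> measure (density M p) U = (\<integral>x. p x * indicator U x \<partial>M)"
proof -
  have em: "emeasure (density M p) U = (\<integral>\<^sup>+ x. ennreal (p x * indicator U x) \<partial>M)"
    if "U \<in> sets M" for U
    using that by (subst emeasure_density) (auto intro!: nn_integral_cong simp: indicator_def)
  have "emeasure (density M p) (space M) = 1"
    using prob_space.emeasure_space_1[OF P] by simp
  moreover have "(\<integral>\<^sup>+ x. ennreal (p x * indicator (space M) x) \<partial>M) = (\<integral>\<^sup>+ x. ennreal (p x) \<partial>M)"
    by (intro nn_integral_cong) (auto simp: indicator_def)
  ultimately have one: "(\<integral>\<^sup>+ x. ennreal (p x) \<partial>M) = ennreal 1"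
    using em[of "space M"] by simp
  show int: "integrable M p"
    by (rule integrableI_nn_integral_finite[OF pm _ one]) (use pn in auto)
  show "integral\<^sup>L M p = 1"
    using nn_integral_eq_integral[OF int] pn one by auto
  fix U assume U[measurable]: "U \<in> sets M"
  show intU: "integrable M (\<lambda>x. p x * indicator U x)"
    using integrable_real_mult_indicator[OF U int] by simp
  have "emeasure (density M p) U = ennreal (\<integral>x. p x * indicator U x \<partial>M)"
    using em[OF U] nn_integral_eq_integral[OF intU] pn by auto
  then show "measure (density M p) U = (\<integral>x. p x * indicator U x \<partial>M)"
    unfolding measure_def by (simp add: integral_nonneg_AE pn)
qed



lemma ereal_arith_aux:
  fixes L D :: ereal
  assumes "L \<le> D - ereal (a - b)"
  shows "ereal a + L - ereal b \<le> D"
  using assms by (cases L; cases D) auto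

theorem theorem5:
  fixes f :: "real \<Rightarrow> real" and \<mu> P Q :: "'a measure"
    and p q :: "'a \<Rightarrow> real" and \<gamma> :: real
  assumes "convex_on {0<..} f" and "f 1 = 0"
    and "prob_space P" and "prob_space Q"
    and "p \<in> borel_measurable \<mu>" and "q \<in> borel_measurable \<mu>"
    and "\<forall>x\<in>space \<mu>. p x \<ge> 0" and "\<forall>x\<in>space \<mu>. q x \<ge> 0"
    and "P = density \<mu> p" and "Q = density \<mu> q"
    and "\<gamma> \<ge> 1"
  shows "f_divergence f \<mu> p q \<ge>
           f_star f (1 + E_gamma \<gamma> P Q / \<gamma>)
         + f_star f ((1 - E_gamma \<gamma> P Q) / \<gamma>)
         - f_star f (1 / \<gamma>)"
proof -
  note cvx = assms(1) and f1 = assms(2)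
  have gpos: "\<gamma> > 0" using assms(11) by simp
  have pm[measurable]: "p \<in> borel_measurable \<mu>" and qm[measurable]: "q \<in> borel_measurable \<mu>"
    using assms(5,6) .
  note dp = dens[OF assms(3)[unfolded assms(9)] assms(5) assms(7), folded assms(9)]
  note dq = dens[OF assms(4)[unfolded assms(10)] assms(6) assms(8), folded assms(10)]
  define m where "m x = max 0 (p x - \<gamma> * q x)" for x
  have mint: "integrable \<mu> m"
    unfolding m_def using dp(1) dq(1) by (intro integrable_max integrable_zero integrable_diff integrable_mult_right) auto
  define E where "E = (\<integral>x. m x \<partial>\<mu>)"
  have Eeq: "E_gamma \<gamma> P Q = E"
  proof -
    have "E_gamma \<gamma> P Q = Sup ((\<lambda>U. measure P U - \<gamma> * measure Q U) ` sets \<mu>)"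
      unfolding E_gamma_def using assms(9) by simp
    also have "\<dots> = E"
    proof (rule cSup_eq_maximum)
      define U0 where "U0 = {x\<in>space \<mu>. \<gamma> * q x < p x}"
      have U0: "U0 \<in> sets \<mu>" unfolding U0_def by measurable
      have "measure P U0 - \<gamma> * measure Q U0 = (\<integral>x. p x * indicator U0 x - \<gamma> * (q x * indicator U0 x) \<partial>\<mu>)"
        using dp(3,4) dq(3,4) U0 by simp
      also have "\<dots> = E" unfolding E_def
        by (rule Bochner_Integration.integral_cong[OF refl]) (auto simp: m_def U0_def indicator_def)
      finally show "E \<in> (\<lambda>U. measure P U - \<gamma> * measure Q U) ` sets \<mu>" using U0 by force
    next
      fix y assume "y \<in> (\<lambda>U. measure P U - \<gamma> * measure Q U) ` sets \<mu>"
      then obtain U where U: "U \<in> sets \<mu>" and y: "y = measure P U - \<gamma> * measure Q U" by auto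
      have "y = (\<integral>x. p x * indicator U x - \<gamma> * (q x * indicator U x) \<partial>\<mu>)"
        using dp(3,4) dq(3,4) U y by simp
      also have "\<dots> \<le> E" unfolding E_def
      proof (rule Bochner_Integration.integral_mono)
        show "integrable \<mu> (\<lambda>x. p x * indicator U x - \<gamma> * (q x * indicator U x))"
          using dp(3)[OF U] dq(3)[OF U] by simp
        show "integrable \<mu> m" by (rule mint)
        fix x show "p x * indicator U x - \<gamma> * (q x * indicator U x) \<le> m x"
          unfolding m_def by (cases "x \<in> U") simp_all
      qed
      finally show "y \<le> E" .
    qed
    finally show ?thesis .
  qed
  have E0: "0 \<le> E" unfolding E_def m_def by (intro integral_nonneg_AE) auto
  have E1: "E \<le> 1"
  proof -
    have "E \<le> integral\<^sup>L \<mu> p" unfolding E_def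
      using mint dp(1) assms(7,8) gpos by (intro integral_mono) (auto simp: m_def)
    then show ?thesis using dp(2) by simp
  qed
  have key: "ereal (A1 + A2 - f \<gamma> / \<gamma> + B1 * (1 / \<gamma> - E / \<gamma>) + B2 * (1 + E / \<gamma>))
      \<le> f_divergence f \<mu> p q"
    if t1: "\<forall>u>0. A1 * u + B1 \<le> f u" and t2: "\<forall>u>0. A2 * u + B2 \<le> f u" for A1 B1 A2 B2
  proof -
    define g where "g x = (A1 + A2 - f \<gamma> / \<gamma> + B1 / \<gamma>) * p x + B2 * q x + ((B2 - B1) / \<gamma>) * m x" for x
    have gint: "integrable \<mu> g" unfolding g_def using dp(1) dq(1) mint by auto
    have gval: "integral\<^sup>L \<mu> g = A1 + A2 - f \<gamma> / \<gamma> + B1 * (1 / \<gamma> - E / \<gamma>) + B2 * (1 + E / \<gamma>)"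
    proof -
      have "integral\<^sup>L \<mu> g = (A1 + A2 - f \<gamma> / \<gamma> + B1 / \<gamma>) * 1 + B2 * 1 + ((B2 - B1) / \<gamma>) * E"
        unfolding g_def E_def using dp(1,2) dq(1,2) mint by simp
      then show ?thesis by (simp add: algebra_simps diff_divide_distrib)
    qed
    have "\<forall>x\<in>space \<mu>. ereal (g x) \<le> fdiv_integrand f (p x) (q x)"
    proof
      fix x assume x: "x \<in> space \<mu>"
      have "g x = p x * (A1 + A2 - f \<gamma> / \<gamma>) + B1 * (p x / \<gamma> - max 0 (p x - \<gamma> * q x) / \<gamma>)
                + B2 * (q x + max 0 (p x - \<gamma> * q x) / \<gamma>)"
        unfolding g_def m_def by (simp add: algebra_simps diff_divide_distrib)
      then show "ereal (g x) \<le> fdiv_integrand f (p x) (q x)"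
        using pw[OF t1 t2 gpos lims(1)[OF cvx f1 t2] lims(2)[OF cvx f1 t1]] x assms(7,8) by simp
    qed
    from div_ge[OF gint this] show ?thesis unfolding f_divergence_def gval .
  qed
  have tang: "\<exists>A B. (\<forall>u>0. A * u + B \<le> f u) \<and> A + B * x = x * f (1 / x)" if "x > 0" for x
  proof -
    have "1/x > 0" using that by simp
    then obtain g where g: "\<forall>u>0. f (1/x) + g * (u - 1/x) \<le> f u"
      using subgrad[OF cvx] by blast
    show ?thesis
      by (rule exI[of _ g], rule exI[of _ "f (1/x) - g * (1/x)"]) (use g that in \<open>auto simp: algebra_simps\<close>)
  qed
  define x2 where "x2 = 1 + E / \<gamma>"
  have x2: "x2 > 0" unfolding x2_def using E0 gpos by (simp add: add_pos_nonneg)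
  obtain A2 B2 where t2: "\<forall>u>0. A2 * u + B2 \<le> f u" and v2: "A2 + B2 * x2 = x2 * f (1 / x2)"
    using tang[OF x2] by auto
  have fs2: "f_star f x2 = ereal (x2 * f (1 / x2))" using x2 by (simp add: f_star_def)
  have fsg: "f_star f (1 / \<gamma>) = ereal (f \<gamma> / \<gamma>)" using gpos by (simp add: f_star_def)
  show ?thesis
  proof (cases "E < 1")
    case True
    define x1 where "x1 = (1 - E) / \<gamma>"
    have x1: "x1 > 0" unfolding x1_def using True gpos by auto
    obtain A1 B1 where t1: "\<forall>u>0. A1 * u + B1 \<le> f u" and v1: "A1 + B1 * x1 = x1 * f (1 / x1)"
      using tang[OF x1] by auto
    have fs1: "f_star f x1 = ereal (x1 * f (1 / x1))" using x1 by (simp add: f_star_def)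
    have x1': "1 / \<gamma> - E / \<gamma> = x1" unfolding x1_def by (simp add: diff_divide_distrib)
    have eq: "A1 + A2 - f \<gamma> / \<gamma> + B1 * (1 / \<gamma> - E / \<gamma>) + B2 * (1 + E / \<gamma>)
        = x2 * f (1 / x2) + x1 * f (1 / x1) - f \<gamma> / \<gamma>"
      unfolding x1' x2_def[symmetric] using v1 v2 by linarith
    have "ereal (x2 * f (1 / x2) + x1 * f (1 / x1) - f \<gamma> / \<gamma>) \<le> f_divergence f \<mu> p q"
      using key[OF t1 t2] unfolding eq .
    then show ?thesis
      unfolding Eeq x1_def[symmetric] x2_def[symmetric] fs1 fs2 fsg by simp
  next
    case False
    then have E1': "E = 1" using E1 by simp
    define K where "K = x2 * f (1 / x2) - f \<gamma> / \<gamma>"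
    have bnd: "ereal (f u / (u - 1)) \<le> f_divergence f \<mu> p q - ereal K" if u: "u > 1" for u
    proof -
      obtain g where g1: "\<forall>w>0. f u + g * (w - u) \<le> f w"
        and g2: "\<forall>v. 0 < v \<and> v < u \<longrightarrow> (f u - f v) / (u - v) \<le> g"
        using subgrad[OF cvx, of u] u by auto
      have gge: "f u / (u - 1) \<le> g" using g2[rule_format, of 1] u f1 by simp
      have t1: "\<forall>w>0. g * w + (f u - g * u) \<le> f w" using g1 by (auto simp: algebra_simps)
      have "ereal (g + K) \<le> f_divergence f \<mu> p q"
      proof -
        have z: "1 / \<gamma> - E / \<gamma> = 0" using E1' by simp
        have e: "g + A2 - f \<gamma> / \<gamma> + (f u - g * u) * (1 / \<gamma> - E / \<gamma>) + B2 * (1 + E / \<gamma>) = g + K"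
          unfolding z x2_def[symmetric] K_def using v2 by simp
        show ?thesis using key[OF t1 t2] unfolding e .
      qed
      then have "ereal g \<le> f_divergence f \<mu> p q - ereal K"
        by (cases "f_divergence f \<mu> p q") auto
      then show ?thesis using gge by (meson ereal_less_eq(3) order_trans)
    qed
    have "(SUP u\<in>{1<..}. ereal (f u / (u - 1))) \<le> f_divergence f \<mu> p q - ereal K"
    proof (rule tendsto_le[OF trivial_limit_at_top_linorder tendsto_const lim_top(1)[OF cvx f1]])
      show "\<forall>\<^sub>F x in at_top. ereal (f x / (x - 1)) \<le> f_divergence f \<mu> p q - ereal K"
        using eventually_gt_at_top[of 1] by eventually_elim (rule bnd)
    qed
    then have "ereal (x2 * f (1 / x2)) + f_star f 0 - ereal (f \<gamma> / \<gamma>) \<le> f_divergence f \<mu> p q"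
      unfolding fstar0[OF cvx f1] K_def by (rule ereal_arith_aux)
    moreover have z0: "(1 - E) / \<gamma> = 0" using E1' by simp
    ultimately show ?thesis unfolding Eeq x2_def[symmetric] z0 fs2 fsg by simp
  qed
qed

end
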